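(* Let $h_1$ and $h_2$ be hybrid path-sums such that the sum $a h_1 \boxplus h_2$ is defined, and let $a$ be a constructible real number. Then $\xi(a h_1 \boxplus h_2) = a\,\xi(h_1) + \xi(h_2)$ (as functions of histories). Moreover, whenever $h_1 \otimes h_2$ is defined, $\xi(h_1 \otimes h_2) = \xi(h_1)\otimes \xi(h_2)$, i.e. $\xi(h_1\otimes h_2)(\eta_1\otimes\eta_2)=\xi(h_1)(\eta_1)\otimes\xi(h_2)(\eta_2)$ for all histories $\eta_1$ of $h_1$ and $\eta_2$ of $h_2$.
   Context: Hybrid path-sums (HPS). Fix Boolean input variables $x_i$ and Boolean path variables $y_j$. An HPS is $h=\langle P, o, s\rangle_{su}$ where: $su$ (the support) is a finite set of path variables, and only input variables and variables of $su$ occur in $P,o,s$; the output $o=(o_{Qu},o_{Cl})$ consists of a quantum memory $o_{Qu}$, a finite map from quantum addresses to Boolean polynomials (over $\mathbb F_2$) in the $x_i,y_j$, and a classical memory $o_{Cl}$, a stack (list) of finite partial maps from classical addresses to Boolean polynomials in the $x_i,y_j$ recording the values of the classical memory at successive time steps (the top entry is the current value; the height of the stack is the age of $h$); the phase $P$ is a polynomial in the $x_i,y_j$ with dyadic rational coefficients; the scalar $s$ is a constructible-real-valued expression in the $x_i,y_j$. A history $\eta$ is a full Boolean instantiation of a classical memory stack. For fixed values of the inputs, the vector map of $h$ is $\xi(h)(\eta)=\sum_{\vec y\in\{0,1\}^{su},\ o_{Cl}(\vec y)=\eta} s(\vec y)\,e^{2\pi i P(\vec y)}\,|o_{Qu}(\vec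 y)\rangle$, a vector in the Hilbert space spanned by computational basis states of the quantum addresses. Sum: for $h_1=\langle P_1,o_1,s_1\rangle_{su_1}$, $h_2=\langle P_2,o_2,s_2\rangle_{su_2}$ with the same addresses and age, and $r$ a constructible real, $r h_1\boxplus h_2:=\langle P,o,s\rangle_{su_1\cup su_2\cup\{y_f\}}$ with $y_f$ a fresh path variable, where (using Boolean selection on $y_f$) for $y_f=0$: $P=P_1$, $o=o_1$, $s=r\,s_1\prod_{y\in su_2\setminus su_1}y$; for $y_f=1$: $P=P_2$, $o=o_2$, $s=s_2\prod_{y\in su_1\setminus su_2}y$. Tensor: if $su_1\cap su_2=\emptyset$ and the quantum addresses and the classical (address, time) cells of $o_1,o_2$ are disjoint, $h_1\otimes h_2:=\langle P_1+P_2, o_1\cup o_2, s_1 s_2\rangle_{su_1\cup su_2}$; the combined history of $\eta_1,\eta_2$ is written $\eta_1\otimes\eta_2$. *)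

theory Defs
  imports Complex_Main
begin

inductive constructible :: "real \<Rightarrow> bool" where
  rat: "constructible (of_rat q)"
| add: "constructible a \<Longrightarrow> constructible b \<Longrightarrow> constructible (a + b)"
| neg: "constructible a \<Longrightarrow> constructible (- a)"
| mult: "constructible a \<Longrightarrow> constructible b \<Longrightarrow> constructible (a * b)"
| inv: "constructible a \<Longrightarrow> constructible (inverse a)"
| sqrt: "constructible a \<Longrightarrow> a \<ge> 0 \<Longrightarrow> constructible (sqrt a)"

definition dyadic :: "real \<Rightarrow> bool" where
  "dyadic r \<longleftrightarrow> (\<exists>(k::int) (n::nat). r = of_int k / 2 ^ n)"

text \<open>Input variables are named by 'i, path variables by 'v, quantum addresses by 'q,
  classical addresses by 'c.  Every polynomial / expression is represented by its
  evaluation function on Boolean valuations of the input and path variables.\<close>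

type_synonym ('i,'v,'a) expr = "('i \<Rightarrow> bool) \<Rightarrow> ('v \<Rightarrow> bool) \<Rightarrow> 'a"

record ('i,'v,'q,'c) hps =
  supp :: "'v set"
  phase :: "('i,'v,real) expr"
  qmem :: "'q \<rightharpoonup> ('i,'v,bool) expr"
  cmem :: "('c \<rightharpoonup> ('i,'v,bool) expr) list"
  scal :: "('i,'v,real) expr"

definition depends_only :: "'v set \<Rightarrow> ('i,'v,'a) expr \<Rightarrow> bool" where
  "depends_only S f \<longleftrightarrow> (\<forall>x y y'. (\<forall>v\<in>S. y v = y' v) \<longrightarrow> f x y = f x y')"

definition wf_hps :: "('i,'v,'q,'c) hps \<Rightarrow> bool" where
  "wf_hps h \<longleftrightarrow>
     finite (supp h) \<and> finite (dom (qmem h)) \<and> (\<forall>m\<in>set (cmem h). finite (dom m))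
   \<and> depends_only (supp h) (phase h) \<and> depends_only (supp h) (scal h)
   \<and> (\<forall>q p. qmem h q = Some p \<longrightarrow> depends_only (supp h) p)
   \<and> (\<forall>m\<in>set (cmem h). \<forall>c p. m c = Some p \<longrightarrow> depends_only (supp h) p)
   \<and> (\<forall>x y. dyadic (phase h x y)) \<and> (\<forall>x y. constructible (scal h x y))"

definition assignments :: "'v set \<Rightarrow> ('v \<Rightarrow> bool) set" where
  "assignments S = {y. \<forall>v. v \<notin> S \<longrightarrow> \<not> y v}"

text \<open>Basis states: maps from quantum addresses to bool, False outside the address set.\<close>
definition eval_qu :: "('i,'v,'q,'c) hps \<Rightarrow> ('i \<Rightarrow> bool) \<Rightarrow> ('v \<Rightarrow> bool) \<Rightarrow> ('q \<Rightarrow> bool)" where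
  "eval_qu h x y = (\<lambda>q. case qmem h q of Some p \<Rightarrow> p x y | None \<Rightarrow> False)"

definition eval_cl :: "('i,'v,'q,'c) hps \<Rightarrow> ('i \<Rightarrow> bool) \<Rightarrow> ('v \<Rightarrow> bool) \<Rightarrow> ('c \<rightharpoonup> bool) list" where
  "eval_cl h x y = map (\<lambda>m c. map_option (\<lambda>p. p x y) (m c)) (cmem h)"

definition is_history :: "('i,'v,'q,'c) hps \<Rightarrow> ('c \<rightharpoonup> bool) list \<Rightarrow> bool" where
  "is_history h \<eta> \<longleftrightarrow> list_all2 (\<lambda>m e. dom e = dom m) (cmem h) \<eta>"

text \<open>The vector map xi(h)(eta), as a vector (coefficient function) over basis states.\<close>
definition xi :: "('i,'v,'q,'c) hps \<Rightarrow> ('i \<Rightarrow> bool) \<Rightarrow> ('c \<rightharpoonup> bool) list \<Rightarrow> ('q \<Rightarrow> bool) \<Rightarrow> complex" where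
  "xi h x \<eta> = (\<lambda>b. \<Sum>y\<in>{y\<in>assignments (supp h). eval_cl h x y = \<eta>}.
       complex_of_real (scal h x y) * exp (2 * pi * \<i> * complex_of_real (phase h x y))
       * (if eval_qu h x y = b then 1 else 0))"

definition sum_defined :: "('i,'v,'q,'c) hps \<Rightarrow> ('i,'v,'q,'c) hps \<Rightarrow> 'v \<Rightarrow> bool" where
  "sum_defined h1 h2 yf \<longleftrightarrow> dom (qmem h1) = dom (qmem h2)
     \<and> map dom (cmem h1) = map dom (cmem h2)
     \<and> yf \<notin> supp h1 \<union> supp h2"

definition sel :: "'v \<Rightarrow> ('i,'v,'a) expr \<Rightarrow> ('i,'v,'a) expr \<Rightarrow> ('i,'v,'a) expr" where
  "sel yf f0 f1 = (\<lambda>x y. if y yf then f1 x y else f0 x y)"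

definition sel_opt :: "'v \<Rightarrow> ('i,'v,'a) expr option \<Rightarrow> ('i,'v,'a) expr option \<Rightarrow> ('i,'v,'a) expr option" where
  "sel_opt yf a b = (case (a, b) of (Some p0, Some p1) \<Rightarrow> Some (sel yf p0 p1) | _ \<Rightarrow> None)"

definition prod_vars :: "'v set \<Rightarrow> ('i,'v,real) expr" where
  "prod_vars S = (\<lambda>x y. \<Prod>v\<in>S. if y v then 1 else 0)"

definition hsum :: "real \<Rightarrow> ('i,'v,'q,'c) hps \<Rightarrow> ('i,'v,'q,'c) hps \<Rightarrow> 'v \<Rightarrow> ('i,'v,'q,'c) hps" where
  "hsum r h1 h2 yf = \<lparr> supp = supp h1 \<union> supp h2 \<union> {yf},
     phase = sel yf (phase h1) (phase h2),
     qmem = (\<lambda>q. sel_opt yf (qmem h1 q) (qmem h2 q)),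
     cmem = map2 (\<lambda>m1 m2 c. sel_opt yf (m1 c) (m2 c)) (cmem h1) (cmem h2),
     scal = sel yf (\<lambda>x y. r * scal h1 x y * prod_vars (supp h2 - supp h1) x y)
                   (\<lambda>x y. scal h2 x y * prod_vars (supp h1 - supp h2) x y) \<rparr>"

definition tensor_defined :: "('i,'v,'q,'c) hps \<Rightarrow> ('i,'v,'q,'c) hps \<Rightarrow> bool" where
  "tensor_defined h1 h2 \<longleftrightarrow> supp h1 \<inter> supp h2 = {}
     \<and> dom (qmem h1) \<inter> dom (qmem h2) = {}
     \<and> length (cmem h1) = length (cmem h2)
     \<and> (\<forall>i < length (cmem h1). dom (cmem h1 ! i) \<inter> dom (cmem h2 ! i) = {})"

definition htensor :: "('i,'v,'q,'c) hps \<Rightarrow> ('i,'v,'q,'c) hps \<Rightarrow> ('i,'v,'q,'c) hps" where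
  "htensor h1 h2 = \<lparr> supp = supp h1 \<union> supp h2,
     phase = (\<lambda>x y. phase h1 x y + phase h2 x y),
     qmem = qmem h1 ++ qmem h2,
     cmem = map2 (++) (cmem h1) (cmem h2),
     scal = (\<lambda>x y. scal h1 x y * scal h2 x y) \<rparr>"

definition hist_tensor :: "('c \<rightharpoonup> bool) list \<Rightarrow> ('c \<rightharpoonup> bool) list \<Rightarrow> ('c \<rightharpoonup> bool) list" where
  "hist_tensor \<eta>1 \<eta>2 = map2 (++) \<eta>1 \<eta>2"

definition vtensor :: "'q set \<Rightarrow> 'q set \<Rightarrow> (('q \<Rightarrow> bool) \<Rightarrow> complex) \<Rightarrow> (('q \<Rightarrow> bool) \<Rightarrow> complex) \<Rightarrow> ('q \<Rightarrow> bool) \<Rightarrow> complex" where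
  "vtensor Q1 Q2 v1 v2 = (\<lambda>b. if (\<forall>q. b q \<longrightarrow> q \<in> Q1 \<union> Q2)
       then v1 (\<lambda>q. q \<in> Q1 \<and> b q) * v2 (\<lambda>q. q \<in> Q2 \<and> b q) else 0)"

end

theory Submission
  imports Defs
begin


definition restr :: "'v set \<Rightarrow> ('v \<Rightarrow> bool) \<Rightarrow> ('v \<Rightarrow> bool)" where
  "restr S y = (\<lambda>v. v \<in> S \<and> y v)"

lemma dep: "depends_only S f \<Longrightarrow> (\<And>v. v \<in> S \<Longrightarrow> y v = y' v) \<Longrightarrow> f x y = f x y'"
  unfolding depends_only_def by blast

lemma assign_finite: "finite S \<Longrightarrow> finite (assignments S)"
proof -
  assume f: "finite S"
  have "assignments S \<subseteq> (\<lambda>T v. v \<in> T) ` Pow S"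
  proof
    fix y assume "y \<in> assignments S"
    hence "y = (\<lambda>v. v \<in> {v\<in>S. y v})" by (auto simp: assignments_def)
    thus "y \<in> (\<lambda>T v. v \<in> T) ` Pow S" by (rule image_eqI) auto
  qed
  thus ?thesis using f by (meson finite_Pow_iff finite_imageI finite_subset)
qed

lemma sum_split_var:
  assumes "finite S" "z \<notin> S"
  shows "sum f (assignments (insert z S)) = sum f (assignments S) + sum (\<lambda>y. f (y(z:=True))) (assignments S)"
proof -
  have eq: "assignments (insert z S) = assignments S \<union> (\<lambda>y. y(z:=True)) ` assignments S"
  proof
    show "assignments (insert z S) \<subseteq> assignments S \<union> (\<lambda>y. y(z:=True)) ` assignments S"
    proof
      fix y assume y: "y \<in> assignments (insert z S)"
      show "y \<in> assignments S \<union> (\<lambda>y. y(z:=True)) ` assignments S"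
      proof (cases "y z")
        case True
        have "y(z:=False) \<in> assignments S" using y unfolding assignments_def by simp
        moreover have "y = (y(z:=False))(z:=True)" using True by (simp add: fun_eq_iff)
        ultimately show ?thesis by (intro UnI2) (rule image_eqI)
      next
        case False
        hence "y \<in> assignments S" using y unfolding assignments_def by auto
        thus ?thesis by (rule UnI1)
      qed
    qed
  next
    have "assignments S \<subseteq> assignments (insert z S)" unfolding assignments_def by auto
    moreover have "(\<lambda>y. y(z:=True)) ` assignments S \<subseteq> assignments (insert z S)"
      unfolding assignments_def by (simp add: image_subset_iff)
    ultimately show "assignments S \<union> (\<lambda>y. y(z:=True)) ` assignments S \<subseteq> assignments (insert z S)"
      by (rule Un_least)
  qed
  have d1: "\<And>y. y \<in> (\<lambda>y. y(z:=True)) ` assignments S \<Longrightarrow> y z" by (erule imageE) simp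
  have d2: "\<And>y. y \<in> assignments S \<Longrightarrow> \<not> y z" using assms(2) by (simp add: assignments_def)
  have disj: "assignments S \<inter> (\<lambda>y. y(z:=True)) ` assignments S = {}"
    using d1 d2 by blast
  have inj: "inj_on (\<lambda>y. y(z:=True)) (assignments S)"
  proof (rule inj_onI)
    fix y y' assume a: "y \<in> assignments S" "y' \<in> assignments S" and e: "y(z:=True) = y'(z:=True)"
    show "y = y'"
    proof
      fix v show "y v = y' v"
      proof (cases "v = z")
        case True thus ?thesis using d2[OF a(1)] d2[OF a(2)] by simp
      next
        case False thus ?thesis using fun_cong[OF e, of v] by simp
      qed
    qed
  qed
  have fin: "finite (assignments S)" using assms(1) by (rule assign_finite)
  have "sum f (assignments (insert z S)) = sum f (assignments S) + sum f ((\<lambda>y. y(z:=True)) ` assignments S)"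
    unfolding eq by (rule sum.union_disjoint[OF fin finite_imageI[OF fin] disj])
  also have "sum f ((\<lambda>y. y(z:=True)) ` assignments S) = sum (\<lambda>y. f (y(z:=True))) (assignments S)"
    using sum.reindex[OF inj, of f] by (simp add: comp_def)
  finally show ?thesis .
qed

lemma sum_ext:
  assumes "finite S" "finite T" "S \<inter> T = {}"
  shows "(\<Sum>y\<in>assignments (S \<union> T). if (\<forall>v\<in>T. y v) then f y else 0)
       = (\<Sum>y\<in>assignments S. f (\<lambda>v. y v \<or> v \<in> T))"
proof -
  let ?e = "\<lambda>y v. y v \<or> v \<in> T"
  have fin: "finite (assignments (S \<union> T))" using assms by (simp add: assign_finite)
  have "(\<Sum>y\<in>assignments (S \<union> T). if (\<forall>v\<in>T. y v) then f y else 0)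
     = sum f {y\<in>assignments (S \<union> T). \<forall>v\<in>T. y v}"
    by (rule sum.inter_filter[OF fin, symmetric])
  also have "{y\<in>assignments (S \<union> T). \<forall>v\<in>T. y v} = ?e ` assignments S"
  proof
    show "{y\<in>assignments (S \<union> T). \<forall>v\<in>T. y v} \<subseteq> ?e ` assignments S"
    proof
      fix y assume y: "y \<in> {y\<in>assignments (S \<union> T). \<forall>v\<in>T. y v}"
      have r1: "restr S y \<in> assignments S" by (auto simp: restr_def assignments_def)
      have r2: "y = ?e (restr S y)" using y by (auto simp: restr_def assignments_def fun_eq_iff)
      show "y \<in> ?e ` assignments S" by (rule image_eqI[where f="?e", OF r2 r1])
    qed
  next
    show "?e ` assignments S \<subseteq> {y\<in>assignments (S \<union> T). \<forall>v\<in>T. y v}"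
      by (auto simp: assignments_def)
  qed
  also have "sum f (?e ` assignments S) = (\<Sum>y\<in>assignments S. f (?e y))"
  proof (rule sum.reindex[unfolded comp_def])
    show "inj_on ?e (assignments S)"
    proof (rule inj_onI)
      fix y y' assume "y \<in> assignments S" "y' \<in> assignments S" "?e y = ?e y'"
      thus "y = y'" using assms(3) unfolding assignments_def fun_eq_iff by blast
    qed
  qed
  finally show ?thesis .
qed

lemma sum_disj:
  assumes "finite S1" "finite S2" "S1 \<inter> S2 = {}"
  shows "sum f (assignments (S1 \<union> S2))
       = (\<Sum>y1\<in>assignments S1. \<Sum>y2\<in>assignments S2. f (\<lambda>v. y1 v \<or> y2 v))"
proof -
  have dj: "\<And>v. v \<in> S1 \<Longrightarrow> v \<in> S2 \<Longrightarrow> False" using assms(3) by blast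
  have "(\<Sum>y1\<in>assignments S1. \<Sum>y2\<in>assignments S2. f (\<lambda>v. y1 v \<or> y2 v))
      = (\<Sum>(y1,y2)\<in>assignments S1 \<times> assignments S2. f (\<lambda>v. y1 v \<or> y2 v))"
    by (rule sum.cartesian_product)
  also have "\<dots> = sum f (assignments (S1 \<union> S2))"
    apply (rule sum.reindex_bij_witness[where i="\<lambda>y. (restr S1 y, restr S2 y)" and j="\<lambda>(y1,y2) v. y1 v \<or> y2 v"])
    by (auto simp: restr_def assignments_def fun_eq_iff dest: dj)
  finally show ?thesis by simp
qed

lemma prod_vars_eq: "finite T \<Longrightarrow> prod_vars T x y = (if \<forall>v\<in>T. y v then 1 else 0)"
  unfolding prod_vars_def by (induction T rule: finite_induct) auto


definition tm :: "('i,'v,'q,'c) hps \<Rightarrow> ('i \<Rightarrow> bool) \<Rightarrow> ('v \<Rightarrow> bool) \<Rightarrow> ('q \<Rightarrow> bool) \<Rightarrow> complex" where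
  "tm h x y b = complex_of_real (scal h x y) * exp (2 * pi * \<i> * complex_of_real (phase h x y))
       * (if eval_qu h x y = b then 1 else 0)"

lemma xi_alt: "finite (supp h) \<Longrightarrow>
  xi h x \<eta> b = (\<Sum>y\<in>assignments (supp h). if eval_cl h x y = \<eta> then tm h x y b else 0)"
  unfolding xi_def tm_def by (rule sum.inter_filter) (simp add: assign_finite)

lemma eval_cl_dep: "wf_hps h \<Longrightarrow> (\<And>v. v \<in> supp h \<Longrightarrow> y v = y' v) \<Longrightarrow> eval_cl h x y = eval_cl h x y'"
proof -
  assume w: "wf_hps h" and e: "\<And>v. v \<in> supp h \<Longrightarrow> y v = y' v"
  have d: "\<And>m c p. m \<in> set (cmem h) \<Longrightarrow> m c = Some p \<Longrightarrow> depends_only (supp h) p"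
    using w unfolding wf_hps_def by blast
  show ?thesis unfolding eval_cl_def
  proof (rule map_cong[OF refl])
    fix m assume m: "m \<in> set (cmem h)"
    show "(\<lambda>c. map_option (\<lambda>p. p x y) (m c)) = (\<lambda>c. map_option (\<lambda>p. p x y') (m c))"
    proof
      fix c show "map_option (\<lambda>p. p x y) (m c) = map_option (\<lambda>p. p x y') (m c)"
      proof (cases "m c")
        case None thus ?thesis by simp
      next
        case (Some p)
        have "p x y = p x y'" using dep[OF d[OF m Some] e] .
        thus ?thesis using Some by simp
      qed
    qed
  qed
qed

lemma eval_qu_dep: "wf_hps h \<Longrightarrow> (\<And>v. v \<in> supp h \<Longrightarrow> y v = y' v) \<Longrightarrow> eval_qu h x y = eval_qu h x y'"
proof -
  assume w: "wf_hps h" and e: "\<And>v. v \<in> supp h \<Longrightarrow> y v = y' v"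
  have d: "\<And>q p. qmem h q = Some p \<Longrightarrow> depends_only (supp h) p"
    using w unfolding wf_hps_def by blast
  show ?thesis unfolding eval_qu_def
  proof
    fix q show "(case qmem h q of Some p \<Rightarrow> p x y | None \<Rightarrow> False) = (case qmem h q of Some p \<Rightarrow> p x y' | None \<Rightarrow> False)"
    proof (cases "qmem h q")
      case None thus ?thesis by simp
    next
      case (Some p)
      have "p x y = p x y'" using dep[OF d[OF Some] e] .
      thus ?thesis using Some by simp
    qed
  qed
qed

lemma tm_dep: "wf_hps h \<Longrightarrow> (\<And>v. v \<in> supp h \<Longrightarrow> y v = y' v) \<Longrightarrow> tm h x y b = tm h x y' b"
proof -
  assume w: "wf_hps h" and e: "\<And>v. v \<in> supp h \<Longrightarrow> y v = y' v"
  have d1: "depends_only (supp h) (scal h)" and d2: "depends_only (supp h) (phase h)"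
    using w unfolding wf_hps_def by blast+
  have "scal h x y = scal h x y'" "phase h x y = phase h x y'"
    using dep[where y=y and y'=y', OF d1 e] dep[where y=y and y'=y', OF d2 e] by blast+
  moreover have "eval_qu h x y = eval_qu h x y'" using eval_qu_dep[OF w e] .
  ultimately show ?thesis unfolding tm_def by simp
qed

lemma sel_opt_dom: "dom m1 = dom m2 \<Longrightarrow> map_option (\<lambda>p. p x y) (sel_opt yf (m1 c) (m2 c))
   = (if y yf then map_option (\<lambda>p. p x y) (m2 c) else map_option (\<lambda>p. p x y) (m1 c))"
proof -
  assume d: "dom m1 = dom m2"
  hence "(m1 c = None) = (m2 c = None)" by (metis domIff)
  thus ?thesis by (cases "m1 c"; cases "m2 c") (auto simp: sel_opt_def sel_def)
qed

lemma eval_cl_list: "map dom l1 = map dom l2 \<Longrightarrow>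
   map (\<lambda>m c. map_option (\<lambda>p. p x y) (m c)) (map2 (\<lambda>m1 m2 c. sel_opt yf (m1 c) (m2 c)) l1 l2)
 = (if y yf then map (\<lambda>m c. map_option (\<lambda>p. p x y) (m c)) l2 else map (\<lambda>m c. map_option (\<lambda>p. p x y) (m c)) l1)"
proof (induction l1 arbitrary: l2)
  case Nil thus ?case by simp
next
  case (Cons m l1)
  then obtain m' l2' where l2: "l2 = m' # l2'" by (cases l2) auto
  with Cons.prems have "dom m = dom m'" "map dom l1 = map dom l2'" by auto
  with Cons.IH[of l2'] show ?case unfolding l2 by (auto simp: fun_eq_iff sel_opt_dom)
qed

lemma eval_cl_hsum: "map dom (cmem h1) = map dom (cmem h2) \<Longrightarrow>
  eval_cl (hsum a h1 h2 yf) x y = (if y yf then eval_cl h2 x y else eval_cl h1 x y)"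
  unfolding eval_cl_def hsum_def hps.select_convs by (rule eval_cl_list)

lemma eval_qu_hsum: "dom (qmem h1) = dom (qmem h2) \<Longrightarrow>
  eval_qu (hsum a h1 h2 yf) x y = (if y yf then eval_qu h2 x y else eval_qu h1 x y)"
proof -
  assume d: "dom (qmem h1) = dom (qmem h2)"
  { fix q
    have "(qmem h1 q = None) = (qmem h2 q = None)" using d by (metis domIff)
    hence "(case sel_opt yf (qmem h1 q) (qmem h2 q) of Some p \<Rightarrow> p x y | None \<Rightarrow> False)
       = (if y yf then (case qmem h2 q of Some p \<Rightarrow> p x y | None \<Rightarrow> False)
          else (case qmem h1 q of Some p \<Rightarrow> p x y | None \<Rightarrow> False))"
      by (cases "qmem h1 q"; cases "qmem h2 q") (auto simp: sel_opt_def sel_def) }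
  thus ?thesis unfolding eval_qu_def hsum_def by (auto simp: fun_eq_iff)
qed

lemma tm_hsum0: "\<not> y yf \<Longrightarrow> dom (qmem h1) = dom (qmem h2) \<Longrightarrow>
  tm (hsum a h1 h2 yf) x y b = complex_of_real a * complex_of_real (prod_vars (supp h2 - supp h1) x y) * tm h1 x y b"
  unfolding tm_def by (simp add: eval_qu_hsum) (simp add: hsum_def sel_def)

lemma tm_hsum1: "y yf \<Longrightarrow> dom (qmem h1) = dom (qmem h2) \<Longrightarrow>
  tm (hsum a h1 h2 yf) x y b = complex_of_real (prod_vars (supp h1 - supp h2) x y) * tm h2 x y b"
  unfolding tm_def by (simp add: eval_qu_hsum) (simp add: hsum_def sel_def)


lemma part1:
  fixes h1 h2 :: "('i,'v,'q,'c) hps"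
  assumes w1: "wf_hps h1" and w2: "wf_hps h2" and sd: "sum_defined h1 h2 yf"
  shows "xi (hsum a h1 h2 yf) x \<eta> b = complex_of_real a * xi h1 x \<eta> b + xi h2 x \<eta> b"
proof -
  let ?H = "hsum a h1 h2 yf"
  let ?S1 = "supp h1" and ?S2 = "supp h2"
  have f1: "finite ?S1" and f2: "finite ?S2" using w1 w2 by (auto simp: wf_hps_def)
  have dq: "dom (qmem h1) = dom (qmem h2)" and dc: "map dom (cmem h1) = map dom (cmem h2)"
    and yf: "yf \<notin> ?S1 \<union> ?S2" using sd by (auto simp: sum_defined_def)
  have sH: "supp ?H = insert yf (?S1 \<union> ?S2)" by (auto simp: hsum_def)
  define g where "g = (\<lambda>y. if eval_cl ?H x y = \<eta> then tm ?H x y b else 0)"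
  have "xi ?H x \<eta> b = sum g (assignments (insert yf (?S1 \<union> ?S2)))"
    unfolding g_def using f1 f2 by (subst xi_alt) (auto simp: sH)
  also have "\<dots> = sum g (assignments (?S1 \<union> ?S2)) + sum (\<lambda>y. g (y(yf:=True))) (assignments (?S1 \<union> ?S2))"
    using f1 f2 yf by (intro sum_split_var) auto
  also have "sum g (assignments (?S1 \<union> ?S2)) = complex_of_real a * xi h1 x \<eta> b"
  proof -
    have "sum g (assignments (?S1 \<union> ?S2)) = (\<Sum>y\<in>assignments (?S1 \<union> (?S2 - ?S1)).
        if (\<forall>v\<in>?S2 - ?S1. y v) then complex_of_real a * (if eval_cl h1 x y = \<eta> then tm h1 x y b else 0) else 0)"
    proof (rule sum.cong)
      show "assignments (?S1 \<union> ?S2) = assignments (?S1 \<union> (?S2 - ?S1))" by simp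
    next
      fix y assume y: "y \<in> assignments (?S1 \<union> (?S2 - ?S1))"
      hence ny: "\<not> y yf" using yf by (auto simp: assignments_def)
      show "g y = (if (\<forall>v\<in>?S2 - ?S1. y v) then complex_of_real a * (if eval_cl h1 x y = \<eta> then tm h1 x y b else 0) else 0)"
        unfolding g_def using ny f1 f2
        by (simp add: eval_cl_hsum[OF dc] tm_hsum0[where y=y and yf=yf, OF ny dq] prod_vars_eq)
    qed
    also have "\<dots> = (\<Sum>y\<in>assignments ?S1. complex_of_real a *
        (if eval_cl h1 x (\<lambda>v. y v \<or> v \<in> ?S2 - ?S1) = \<eta> then tm h1 x (\<lambda>v. y v \<or> v \<in> ?S2 - ?S1) b else 0))"
      using f1 f2 by (intro sum_ext) auto
    also have "\<dots> = (\<Sum>y\<in>assignments ?S1. complex_of_real a *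
        (if eval_cl h1 x y = \<eta> then tm h1 x y b else 0))"
    proof (rule sum.cong[OF refl])
      fix y :: "'v \<Rightarrow> bool"
      have e: "\<And>v. v \<in> ?S1 \<Longrightarrow> (y v \<or> v \<in> ?S2 - ?S1) = y v" by auto
      show "complex_of_real a *
        (if eval_cl h1 x (\<lambda>v. y v \<or> v \<in> ?S2 - ?S1) = \<eta> then tm h1 x (\<lambda>v. y v \<or> v \<in> ?S2 - ?S1) b else 0)
        = complex_of_real a * (if eval_cl h1 x y = \<eta> then tm h1 x y b else 0)"
        using eval_cl_dep[where y="\<lambda>v. y v \<or> v \<in> ?S2 - ?S1" and y'=y, OF w1 e] tm_dep[where y="\<lambda>v. y v \<or> v \<in> ?S2 - ?S1" and y'=y, OF w1 e] by simp
    qed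
    also have "\<dots> = complex_of_real a * xi h1 x \<eta> b"
      using f1 by (simp add: xi_alt sum_distrib_left)
    finally show ?thesis .
  qed
  also have "sum (\<lambda>y. g (y(yf:=True))) (assignments (?S1 \<union> ?S2)) = xi h2 x \<eta> b"
  proof -
    have "sum (\<lambda>y. g (y(yf:=True))) (assignments (?S1 \<union> ?S2)) = (\<Sum>y\<in>assignments (?S2 \<union> (?S1 - ?S2)).
        if (\<forall>v\<in>?S1 - ?S2. y v) then (if eval_cl h2 x y = \<eta> then tm h2 x y b else 0) else 0)"
    proof (rule sum.cong)
      show "assignments (?S1 \<union> ?S2) = assignments (?S2 \<union> (?S1 - ?S2))" by (simp add: Un_commute)
    next
      fix y assume y: "y \<in> assignments (?S2 \<union> (?S1 - ?S2))"
      let ?y = "y(yf:=True)"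
      have ny: "?y yf" by simp
      have e: "\<And>v. v \<in> ?S2 \<Longrightarrow> ?y v = y v" using yf by auto
      have pv: "prod_vars (?S1 - ?S2) x ?y = prod_vars (?S1 - ?S2) x y"
        using f1 yf by (auto simp: prod_vars_eq)
      show "g ?y = (if (\<forall>v\<in>?S1 - ?S2. y v) then (if eval_cl h2 x y = \<eta> then tm h2 x y b else 0) else 0)"
        unfolding g_def using f1 f2
        by (simp add: eval_cl_hsum[OF dc] tm_hsum1[where y="?y" and yf=yf, OF ny dq] pv prod_vars_eq eval_cl_dep[where y="?y" and y'=y, OF w2 e] tm_dep[where y="?y" and y'=y, OF w2 e])
    qed
    also have "\<dots> = (\<Sum>y\<in>assignments ?S2.
        (if eval_cl h2 x (\<lambda>v. y v \<or> v \<in> ?S1 - ?S2) = \<eta> then tm h2 x (\<lambda>v. y v \<or> v \<in> ?S1 - ?S2) b else 0))"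
      using f1 f2 by (intro sum_ext) auto
    also have "\<dots> = (\<Sum>y\<in>assignments ?S2. (if eval_cl h2 x y = \<eta> then tm h2 x y b else 0))"
    proof (rule sum.cong[OF refl])
      fix y :: "'v \<Rightarrow> bool"
      have e: "\<And>v. v \<in> ?S2 \<Longrightarrow> (y v \<or> v \<in> ?S1 - ?S2) = y v" by auto
      show "(if eval_cl h2 x (\<lambda>v. y v \<or> v \<in> ?S1 - ?S2) = \<eta> then tm h2 x (\<lambda>v. y v \<or> v \<in> ?S1 - ?S2) b else 0)
        = (if eval_cl h2 x y = \<eta> then tm h2 x y b else 0)"
        using eval_cl_dep[where y="\<lambda>v. y v \<or> v \<in> ?S1 - ?S2" and y'=y, OF w2 e] tm_dep[where y="\<lambda>v. y v \<or> v \<in> ?S1 - ?S2" and y'=y, OF w2 e] by simp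
    qed
    also have "\<dots> = xi h2 x \<eta> b"
      using f2 by (simp add: xi_alt)
    finally show ?thesis .
  qed
  finally show ?thesis .
qed



lemma eval_qu_outside: "q \<notin> dom (qmem h) \<Longrightarrow> \<not> eval_qu h x y q"
  unfolding eval_qu_def by (auto simp: domIff)

lemma eval_qu_ht: "eval_qu (htensor h1 h2) x y
   = (\<lambda>q. if q \<in> dom (qmem h2) then eval_qu h2 x y q else eval_qu h1 x y q)"
  unfolding eval_qu_def htensor_def map_add_def by (auto simp: fun_eq_iff split: option.split)

lemma qu_eq:
  assumes "Q1 \<inter> Q2 = {}" "\<And>q. q \<notin> Q1 \<Longrightarrow> \<not> e1 q" "\<And>q. q \<notin> Q2 \<Longrightarrow> \<not> e2 q"
  shows "((\<lambda>q. if q \<in> Q2 then e2 q else e1 q) = b) \<longleftrightarrow>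
     (\<forall>q. b q \<longrightarrow> q \<in> Q1 \<union> Q2) \<and> e1 = (\<lambda>q. q \<in> Q1 \<and> b q) \<and> e2 = (\<lambda>q. q \<in> Q2 \<and> b q)"
proof
  assume H: "(\<lambda>q. if q \<in> Q2 then e2 q else e1 q) = b"
  have Hq: "\<And>q. b q = (if q \<in> Q2 then e2 q else e1 q)" using H by auto
  show "(\<forall>q. b q \<longrightarrow> q \<in> Q1 \<union> Q2) \<and> e1 = (\<lambda>q. q \<in> Q1 \<and> b q) \<and> e2 = (\<lambda>q. q \<in> Q2 \<and> b q)"
    using assms unfolding fun_eq_iff Hq by auto
next
  assume H: "(\<forall>q. b q \<longrightarrow> q \<in> Q1 \<union> Q2) \<and> e1 = (\<lambda>q. q \<in> Q1 \<and> b q) \<and> e2 = (\<lambda>q. q \<in> Q2 \<and> b q)"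
  show "(\<lambda>q. if q \<in> Q2 then e2 q else e1 q) = b"
    using H assms(1) by (auto simp: fun_eq_iff)
qed

lemma map_option_add: "(\<lambda>c. map_option f ((m1 ++ m2) c)) = (\<lambda>c. map_option f (m1 c)) ++ (\<lambda>c. map_option f (m2 c))"
  unfolding map_add_def by (auto simp: fun_eq_iff split: option.split)

lemma eval_cl_list2: "length l1 = length l2 \<Longrightarrow>
   map (\<lambda>m c. map_option f (m c)) (map2 (++) l1 l2)
 = map2 (++) (map (\<lambda>m c. map_option f (m c)) l1) (map (\<lambda>m c. map_option f (m c)) l2)"
proof (induction l1 arbitrary: l2)
  case Nil thus ?case by simp
next
  case (Cons m l1)
  then obtain m' l2' where l2: "l2 = m' # l2'" by (cases l2) auto
  with Cons show ?case using map_option_add by auto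
qed

lemma eval_cl_ht: "length (cmem h1) = length (cmem h2) \<Longrightarrow>
  eval_cl (htensor h1 h2) x y = map2 (++) (eval_cl h1 x y) (eval_cl h2 x y)"
  unfolding eval_cl_def htensor_def hps.select_convs by (rule eval_cl_list2)

lemma map_add_inj:
  assumes "dom a1 = dom b1" "dom a2 = dom b2" "dom a1 \<inter> dom a2 = {}"
  shows "(a1 ++ a2 = b1 ++ b2) \<longleftrightarrow> (a1 = b1 \<and> a2 = b2)"
proof
  assume e: "a1 ++ a2 = b1 ++ b2"
  have "a1 c = b1 c \<and> a2 c = b2 c" for c
  proof (cases "c \<in> dom a2")
    case True
    have nb: "c \<notin> dom a1" using True assms(3) by blast
    have "a1 c = None" using nb by (simp add: domIff)
    moreover have "b1 c = None" using nb assms(1) by (metis domIff)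
    moreover have "c \<in> dom b2" using True assms(2) by simp
    moreover have "a2 c = b2 c" using fun_cong[OF e, of c] True \<open>c \<in> dom b2\<close> by (metis map_add_dom_app_simps(1))
    ultimately show ?thesis by simp
  next
    case False
    hence "a2 c = None" by (simp add: domIff)
    moreover have "b2 c = None" using False assms(2) by (metis domIff)
    moreover have "a1 c = b1 c" using fun_cong[OF e, of c] calculation by (simp add: map_add_def)
    ultimately show ?thesis by simp
  qed
  thus "a1 = b1 \<and> a2 = b2" by (auto simp: fun_eq_iff)
qed simp

lemma map2_add_inj:
  assumes "length l1 = n" "length k1 = n" "length l2 = n" "length k2 = n"
    "\<And>i. i < n \<Longrightarrow> dom (l1!i) = dom (k1!i) \<and> dom (l2!i) = dom (k2!i) \<and> dom (l1!i) \<inter> dom (l2!i) = {}"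
  shows "(map2 (++) l1 l2 = map2 (++) k1 k2) \<longleftrightarrow> (l1 = k1 \<and> l2 = k2)"
proof
  assume e: "map2 (++) l1 l2 = map2 (++) k1 k2"
  have "l1!i = k1!i \<and> l2!i = k2!i" if i: "i < n" for i
  proof -
    have "(l1!i) ++ (l2!i) = (k1!i) ++ (k2!i)" using arg_cong[OF e, of "\<lambda>l. l!i"] i assms(1-4) by simp
    moreover have "dom (l1!i) = dom (k1!i)" "dom (l2!i) = dom (k2!i)" "dom (l1!i) \<inter> dom (l2!i) = {}"
      using assms(5)[OF i] by blast+
    ultimately show ?thesis using map_add_inj[of "l1!i" "k1!i" "l2!i" "k2!i"] by simp
  qed
  thus "l1 = k1 \<and> l2 = k2" using assms(1-4) by (simp add: list_eq_iff_nth_eq)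
qed simp

lemma dom_eval_cl: "i < length (cmem h) \<Longrightarrow> dom (eval_cl h x y ! i) = dom (cmem h ! i)"
  unfolding eval_cl_def by (auto simp: dom_def)


lemma part2:
  fixes h1 h2 :: "('i,'v,'q,'c) hps"
  assumes w1: "wf_hps h1" and w2: "wf_hps h2" and td: "tensor_defined h1 h2"
    and hh1: "is_history h1 \<eta>1" and hh2: "is_history h2 \<eta>2"
  shows "xi (htensor h1 h2) x (hist_tensor \<eta>1 \<eta>2) b
       = vtensor (dom (qmem h1)) (dom (qmem h2)) (xi h1 x \<eta>1) (xi h2 x \<eta>2) b"
proof -
  let ?HT = "htensor h1 h2"
  let ?S1 = "supp h1" and ?S2 = "supp h2"
  let ?Q1 = "dom (qmem h1)" and ?Q2 = "dom (qmem h2)"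
  have f1: "finite ?S1" and f2: "finite ?S2" using w1 w2 by (auto simp: wf_hps_def)
  have dS: "?S1 \<inter> ?S2 = {}" and dQ: "?Q1 \<inter> ?Q2 = {}"
    and len: "length (cmem h1) = length (cmem h2)"
    and dC: "\<And>i. i < length (cmem h1) \<Longrightarrow> dom (cmem h1 ! i) \<inter> dom (cmem h2 ! i) = {}"
    using td by (auto simp: tensor_defined_def)
  have l1: "length \<eta>1 = length (cmem h1)" and n1: "\<And>i. i < length (cmem h1) \<Longrightarrow> dom (\<eta>1 ! i) = dom (cmem h1 ! i)"
    using hh1 by (auto simp: is_history_def list_all2_conv_all_nth)
  have l2: "length \<eta>2 = length (cmem h2)" and n2: "\<And>i. i < length (cmem h2) \<Longrightarrow> dom (\<eta>2 ! i) = dom (cmem h2 ! i)"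
    using hh2 by (auto simp: is_history_def list_all2_conv_all_nth)
  define ok where "ok = (\<forall>q. b q \<longrightarrow> q \<in> ?Q1 \<union> ?Q2)"
  define b1 where "b1 = (\<lambda>q. q \<in> ?Q1 \<and> b q)"
  define b2 where "b2 = (\<lambda>q. q \<in> ?Q2 \<and> b q)"
  define G1 where "G1 = (\<lambda>y1. if eval_cl h1 x y1 = \<eta>1 then tm h1 x y1 b1 else 0)"
  define G2 where "G2 = (\<lambda>y2. if eval_cl h2 x y2 = \<eta>2 then tm h2 x y2 b2 else 0)"
  define T where "T = (\<lambda>y. if eval_cl ?HT x y = hist_tensor \<eta>1 \<eta>2 then tm ?HT x y b else 0)"
  have sHT: "supp ?HT = ?S1 \<union> ?S2" by (simp add: htensor_def)
  have key: "T (\<lambda>v. y1 v \<or> y2 v) = (if ok then G1 y1 * G2 y2 else 0)"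
    if y1: "y1 \<in> assignments ?S1" and y2: "y2 \<in> assignments ?S2" for y1 y2
  proof -
    let ?y = "\<lambda>v. y1 v \<or> y2 v"
    have e1: "\<And>v. v \<in> ?S1 \<Longrightarrow> ?y v = y1 v" using y2 dS by (auto simp: assignments_def)
    have e2: "\<And>v. v \<in> ?S2 \<Longrightarrow> ?y v = y2 v" using y1 dS by (auto simp: assignments_def)
    have c1: "eval_cl h1 x ?y = eval_cl h1 x y1" by (rule eval_cl_dep[where y="?y" and y'=y1, OF w1 e1])
    have c2: "eval_cl h2 x ?y = eval_cl h2 x y2" by (rule eval_cl_dep[where y="?y" and y'=y2, OF w2 e2])
    have q1: "eval_qu h1 x ?y = eval_qu h1 x y1" by (rule eval_qu_dep[where y="?y" and y'=y1, OF w1 e1])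
    have q2: "eval_qu h2 x ?y = eval_qu h2 x y2" by (rule eval_qu_dep[where y="?y" and y'=y2, OF w2 e2])
    have ds1: "depends_only ?S1 (scal h1)" "depends_only ?S1 (phase h1)" using w1 by (auto simp: wf_hps_def)
    have ds2: "depends_only ?S2 (scal h2)" "depends_only ?S2 (phase h2)" using w2 by (auto simp: wf_hps_def)
    have s1: "scal h1 x ?y = scal h1 x y1" "phase h1 x ?y = phase h1 x y1"
      using dep[where y="?y" and y'=y1, OF ds1(1) e1] dep[where y="?y" and y'=y1, OF ds1(2) e1] by blast+
    have s2: "scal h2 x ?y = scal h2 x y2" "phase h2 x ?y = phase h2 x y2"
      using dep[where y="?y" and y'=y2, OF ds2(1) e2] dep[where y="?y" and y'=y2, OF ds2(2) e2] by blast+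
    have clT: "eval_cl ?HT x ?y = map2 (++) (eval_cl h1 x y1) (eval_cl h2 x y2)"
      using eval_cl_ht[OF len] c1 c2 by simp
    have cl_iff: "(eval_cl ?HT x ?y = hist_tensor \<eta>1 \<eta>2) \<longleftrightarrow> (eval_cl h1 x y1 = \<eta>1 \<and> eval_cl h2 x y2 = \<eta>2)"
      unfolding clT hist_tensor_def
    proof (rule map2_add_inj[where n="length (cmem h1)"])
      show "length (eval_cl h1 x y1) = length (cmem h1)" by (simp add: eval_cl_def)
      show "length \<eta>1 = length (cmem h1)" by (rule l1)
      show "length (eval_cl h2 x y2) = length (cmem h1)" using len by (simp add: eval_cl_def)
      show "length \<eta>2 = length (cmem h1)" using l2 len by simp
      fix i assume i: "i < length (cmem h1)"
      show "dom (eval_cl h1 x y1 ! i) = dom (\<eta>1 ! i) \<and> dom (eval_cl h2 x y2 ! i) = dom (\<eta>2 ! i)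
          \<and> dom (eval_cl h1 x y1 ! i) \<inter> dom (eval_cl h2 x y2 ! i) = {}"
        using i len dom_eval_cl[of i h1 x y1] dom_eval_cl[of i h2 x y2] n1[OF i] n2[of i] dC[OF i] by simp
    qed
    have quT: "eval_qu ?HT x ?y = (\<lambda>q. if q \<in> ?Q2 then eval_qu h2 x y2 q else eval_qu h1 x y1 q)"
      using eval_qu_ht[of h1 h2 x ?y] q1 q2 by simp
    have qu_iff: "(eval_qu ?HT x ?y = b) \<longleftrightarrow> ok \<and> eval_qu h1 x y1 = b1 \<and> eval_qu h2 x y2 = b2"
      unfolding quT ok_def b1_def b2_def
      by (rule qu_eq[OF dQ]) (simp_all add: eval_qu_outside)
    have sc: "scal ?HT x ?y = scal h1 x y1 * scal h2 x y2" using s1 s2 by (simp add: htensor_def)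
    have ph: "phase ?HT x ?y = phase h1 x y1 + phase h2 x y2" using s1 s2 by (simp add: htensor_def)
    have ex: "exp (2 * pi * \<i> * complex_of_real (phase ?HT x ?y))
       = exp (2 * pi * \<i> * complex_of_real (phase h1 x y1)) * exp (2 * pi * \<i> * complex_of_real (phase h2 x y2))"
      unfolding ph by (simp add: distrib_left exp_add)
    show ?thesis
      unfolding T_def G1_def G2_def tm_def cl_iff qu_iff sc ex
      by (simp add: algebra_simps)
  qed
  have "xi ?HT x (hist_tensor \<eta>1 \<eta>2) b = sum T (assignments (?S1 \<union> ?S2))"
    unfolding T_def using f1 f2 by (subst xi_alt) (auto simp: sHT)
  also have "\<dots> = (\<Sum>y1\<in>assignments ?S1. \<Sum>y2\<in>assignments ?S2. T (\<lambda>v. y1 v \<or> y2 v))"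
    by (rule sum_disj[OF f1 f2 dS])
  also have "\<dots> = (\<Sum>y1\<in>assignments ?S1. \<Sum>y2\<in>assignments ?S2. if ok then G1 y1 * G2 y2 else 0)"
    by (intro sum.cong refl key)
  also have "\<dots> = (if ok then xi h1 x \<eta>1 b1 * xi h2 x \<eta>2 b2 else 0)"
  proof (cases ok)
    case True
    have "xi h1 x \<eta>1 b1 * xi h2 x \<eta>2 b2 = sum G1 (assignments ?S1) * sum G2 (assignments ?S2)"
      unfolding G1_def G2_def using f1 f2 by (simp add: xi_alt)
    also have "\<dots> = (\<Sum>y1\<in>assignments ?S1. \<Sum>y2\<in>assignments ?S2. G1 y1 * G2 y2)"
      by (rule sum_product)
    finally show ?thesis using True by simp
  qed simp
  also have "\<dots> = vtensor ?Q1 ?Q2 (xi h1 x \<eta>1) (xi h2 x \<eta>2) b"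
    unfolding vtensor_def ok_def b1_def b2_def by simp
  finally show ?thesis .
qed

theorem mainTheorem1:
  fixes h1 h2 :: "('i,'v,'q,'c) hps" and a :: real and yf :: 'v and x :: "'i \<Rightarrow> bool"
  assumes "wf_hps h1" and "wf_hps h2"
  shows "(constructible a \<and> sum_defined h1 h2 yf \<longrightarrow>
            xi (hsum a h1 h2 yf) x = (\<lambda>\<eta> b. complex_of_real a * xi h1 x \<eta> b + xi h2 x \<eta> b))
       \<and> (tensor_defined h1 h2 \<longrightarrow>
            (\<forall>\<eta>1 \<eta>2. is_history h1 \<eta>1 \<and> is_history h2 \<eta>2 \<longrightarrow>
               xi (htensor h1 h2) x (hist_tensor \<eta>1 \<eta>2)
               = vtensor (dom (qmem h1)) (dom (qmem h2)) (xi h1 x \<eta>1) (xi h2 x \<eta>2)))"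
  using part1[OF assms] part2[OF assms] by (auto simp: fun_eq_iff)

end
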